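(* Let $\alpha > 5/6$ and $c > 0$ be fixed constants, and let $p = n^{-\alpha}$. Let $G \sim G(n,p)$. Then the probability that every set of at most $c\sqrt{n}$ vertices of $G$ induces a $3$-colorable subgraph of $G$ tends to $1$ as $n \to \infty$.
   Context: $G(n,p)$ denotes the random graph on $n$ labelled vertices in which each of the $\binom{n}{2}$ pairs of vertices is an edge independently with probability $p$. A graph is $3$-colorable if its vertices can be colored with $3$ colors so that no two adjacent vertices receive the same color. *)

theory Defs
  imports Complex_Main
begin

text \<open>Simple graphs on the labelled vertex set {0..<n} are represented by their edge sets,
  which are subsets of the set of all 2-element subsets of {0..<n}.\<close>

definition all_edges :: "nat \<Rightarrow> nat set set" where
  "all_edges n = {e. \<exists>i j. i < j \<and> j < n \<and> e = {i, j}}"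

text \<open>Probability that the random graph G(n,p) has property P: each of the
  (n choose 2) pairs is an edge independently with probability p, so the graph with
  edge set E has probability p^|E| (1-p)^(N-|E|).\<close>

definition gnp_prob :: "nat \<Rightarrow> real \<Rightarrow> (nat set set \<Rightarrow> bool) \<Rightarrow> real" where
  "gnp_prob n p P =
     (\<Sum>E\<in>Pow (all_edges n). if P E
        then p ^ card E * (1 - p) ^ (card (all_edges n) - card E) else 0)"

definition induced_3_colorable :: "nat set set \<Rightarrow> nat set \<Rightarrow> bool" where
  "induced_3_colorable E S \<longleftrightarrow>
     (\<exists>col :: nat \<Rightarrow> nat. (\<forall>v\<in>S. col v < 3) \<and>
        (\<forall>u\<in>S. \<forall>v\<in>S. {u, v} \<in> E \<longrightarrow> col u \<noteq> col v))"

end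

theory Submission
  imports Defs
begin


lemma finite_all_edges: "finite (all_edges n)"
proof -
  have "all_edges n \<subseteq> Pow {..<n}" unfolding all_edges_def by auto
  then show ?thesis by (rule finite_subset) auto
qed

lemma weight_prod:
  fixes p :: real
  assumes "E \<subseteq> A" "finite A"
  shows "p ^ card E * (1 - p) ^ (card A - card E) = (\<Prod>x\<in>E. p) * (\<Prod>x\<in>A - E. 1 - p)"
  using assms by (simp add: card_Diff_subset finite_subset)

lemma gnp_superset:
  fixes p :: real
  assumes F: "F \<subseteq> all_edges n"
  shows "gnp_prob n p (\<lambda>E. F \<subseteq> E) = p ^ card F"
proof -
  let ?A = "all_edges n"
  have fin: "finite ?A" by (rule finite_all_edges)
  have "(\<Prod>x\<in>?A. p + (if x \<in> F then 0 else 1 - p)) =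
      (\<Sum>X\<in>Pow ?A. (\<Prod>x\<in>X. p) * (\<Prod>x\<in>?A-X. (if x \<in> F then 0 else 1 - p)))"
    by (rule prod_add[OF fin])
  also have "\<dots> = gnp_prob n p (\<lambda>E. F \<subseteq> E)"
    unfolding gnp_prob_def
  proof (rule sum.cong[OF refl])
    fix X assume X: "X \<in> Pow ?A"
    show "(\<Prod>x\<in>X. p) * (\<Prod>x\<in>?A-X. (if x \<in> F then 0 else 1 - p)) =
       (if F \<subseteq> X then p ^ card X * (1 - p) ^ (card ?A - card X) else 0)"
    proof (cases "F \<subseteq> X")
      case True
      have "(\<Prod>x\<in>?A-X. (if x \<in> F then 0 else 1 - p)) = (\<Prod>x\<in>?A-X. 1 - p)"
        using True by (intro prod.cong) auto
      then show ?thesis using True X fin by (simp add: card_Diff_subset finite_subset)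
    next
      case False
      then obtain y where y: "y \<in> F" "y \<notin> X" by auto
      have "(\<Prod>x\<in>?A-X. (if x \<in> F then 0 else 1 - p)) = 0"
        using y F fin by (intro prod_zero) auto
      then show ?thesis using False by simp
    qed
  qed
  finally have "gnp_prob n p (\<lambda>E. F \<subseteq> E) = (\<Prod>x\<in>?A. p + (if x \<in> F then 0 else 1 - p))" by simp
  also have "\<dots> = (\<Prod>x\<in>?A. if x \<in> F then p else 1)" by (intro prod.cong) auto
  also have "\<dots> = p ^ card F" using F fin
    by (simp add: prod.If_cases Int_absorb1 finite_subset)
  finally show ?thesis .
qed

lemma gnp_total: "gnp_prob n p (\<lambda>E. True) = 1"
  using gnp_superset[of "{}" n p] by simp

lemma gnp_compl: "gnp_prob n p P = 1 - gnp_prob n p (\<lambda>E. \<not> P E)"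
proof -
  have "gnp_prob n p P + gnp_prob n p (\<lambda>E. \<not> P E) = gnp_prob n p (\<lambda>E. True)"
    unfolding gnp_prob_def by (subst sum.distrib[symmetric]) (intro sum.cong, auto)
  then show ?thesis using gnp_total[of n p] by simp
qed

lemma gnp_nonneg:
  assumes "0 \<le> p" "p \<le> 1" shows "0 \<le> gnp_prob n p P"
  unfolding gnp_prob_def using assms by (intro sum_nonneg) auto

lemma gnp_union:
  fixes p :: real
  assumes p: "0 \<le> p" "p \<le> 1" and I: "finite I"
    and H: "\<And>E. E \<subseteq> all_edges n \<Longrightarrow> P E \<Longrightarrow> \<exists>i\<in>I. Q i E"
  shows "gnp_prob n p P \<le> (\<Sum>i\<in>I. gnp_prob n p (Q i))"
proof -
  let ?A = "all_edges n"
  let ?w = "\<lambda>E::nat set set. p ^ card E * (1 - p) ^ (card ?A - card E)"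
  have "gnp_prob n p P = (\<Sum>E\<in>Pow ?A. (if P E then ?w E else 0))" unfolding gnp_prob_def ..
  also have "\<dots> \<le> (\<Sum>E\<in>Pow ?A. (\<Sum>i\<in>I. if Q i E then ?w E else 0))"
  proof (rule sum_mono)
    fix E assume E: "E \<in> Pow ?A"
    show "(if P E then ?w E else 0) \<le> (\<Sum>i\<in>I. if Q i E then ?w E else 0)"
    proof (cases "P E")
      case True
      then obtain i where i: "i \<in> I" "Q i E" using H E by auto
      have "(if Q i E then ?w E else 0) \<le> (\<Sum>i\<in>I. if Q i E then ?w E else 0)"
        using i I p by (intro member_le_sum) auto
      then show ?thesis using True i by simp
    next
      case False then show ?thesis using p by (auto intro!: sum_nonneg)
    qed
  qed
  also have "\<dots> = (\<Sum>i\<in>I. gnp_prob n p (Q i))"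
    unfolding gnp_prob_def by (rule sum.swap)
  finally show ?thesis .
qed



definition pr :: "nat set \<Rightarrow> nat set set" where
  "pr T = {e. \<exists>u\<in>T. \<exists>v\<in>T. u \<noteq> v \<and> e = {u, v}}"

lemma card_pr: assumes "finite T" shows "finite (pr T)" "card (pr T) \<le> card T ^ 2"
proof -
  have sub: "pr T \<subseteq> (\<lambda>(u,v). {u,v}) ` (T \<times> T)" unfolding pr_def by auto
  show "finite (pr T)" using assms by (intro finite_subset[OF sub]) auto
  have "card (pr T) \<le> card ((\<lambda>(u,v). {u,v}) ` (T \<times> T))"
    using assms by (intro card_mono[OF _ sub]) auto
  also have "\<dots> \<le> card (T \<times> T)" by (rule card_image_le) (use assms in auto)
  also have "\<dots> = card T ^ 2" by (simp add: card_cartesian_product power2_eq_square)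
  finally show "card (pr T) \<le> card T ^ 2" .
qed

lemma minimal_noncol:
  assumes "finite S" "\<not> induced_3_colorable E S"
  shows "\<exists>T\<subseteq>S. \<not> induced_3_colorable E T \<and> (\<forall>T'. T' \<subset> T \<longrightarrow> induced_3_colorable E T')"
  using assms
proof (induction "card S" arbitrary: S rule: less_induct)
  case less
  show ?case
  proof (cases "\<forall>T'. T' \<subset> S \<longrightarrow> induced_3_colorable E T'")
    case True then show ?thesis using less.prems(2) by (intro exI[of _ S]) simp
  next
    case False
    then obtain T' where T': "T' \<subset> S" "\<not> induced_3_colorable E T'" by auto
    have "card T' < card S" using T' less.prems by (simp add: psubset_card_mono)
    have "finite T'" using T' less.prems(1) finite_subset psubset_imp_subset by blast
    from less.hyps[OF \<open>card T' < card S\<close> this T'(2)] obtain T where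
      "T \<subseteq> T'" "\<not> induced_3_colorable E T" "\<forall>T''. T'' \<subset> T \<longrightarrow> induced_3_colorable E T''"
      by blast
    then show ?thesis using T' by (intro exI[of _ T]) auto
  qed
qed

lemma critical:
  assumes fin: "finite S" and noloop: "\<forall>v. {v} \<notin> E" and nc: "\<not> induced_3_colorable E S"
  shows "\<exists>T\<subseteq>S. T \<noteq> {} \<and> (\<forall>v\<in>T. 3 \<le> card {u\<in>T. {u,v}\<in>E \<and> u \<noteq> v})"
proof -
  obtain T where T: "T \<subseteq> S" "\<not> induced_3_colorable E T"
     and min: "\<forall>T'. T' \<subset> T \<longrightarrow> induced_3_colorable E T'"
    using minimal_noncol[OF fin nc] by blast
  have finT: "finite T" using T fin finite_subset by auto
  have ne: "T \<noteq> {}" using T(2) unfolding induced_3_colorable_def by auto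
  have "3 \<le> card {u\<in>T. {u,v}\<in>E \<and> u \<noteq> v}" if v: "v \<in> T" for v
  proof (rule ccontr)
    let ?N = "{u\<in>T. {u,v}\<in>E \<and> u \<noteq> v}"
    assume "\<not> 3 \<le> card ?N"
    then have cN: "card ?N \<le> 2" by simp
    have "T - {v} \<subset> T" using v by auto
    then have "induced_3_colorable E (T - {v})" using min by simp
    then obtain col :: "nat \<Rightarrow> nat" where col: "\<forall>w\<in>T-{v}. col w < 3"
       "\<forall>u\<in>T-{v}. \<forall>w\<in>T-{v}. {u, w} \<in> E \<longrightarrow> col u \<noteq> col w"
      unfolding induced_3_colorable_def by blast
    have "card (col ` ?N) \<le> 2" using cN card_image_le[of ?N col] finT by simp
    then have "\<not> {0,1,2::nat} \<subseteq> col ` ?N"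
      using card_mono[of "col ` ?N" "{0,1,2::nat}"] finT by fastforce
    then have "\<exists>c\<in>{0,1,2::nat}. c \<notin> col ` ?N" by blast
    then obtain c where c0: "c \<in> {0,1,2::nat}" "c \<notin> col ` ?N" by blast
    then have c: "c < 3" "c \<notin> col ` ?N" by auto
    define col' where "col' = col(v := c)"
    have "induced_3_colorable E T"
      unfolding induced_3_colorable_def
    proof (intro exI[of _ col'] conjI ballI impI)
      fix w assume "w \<in> T" then show "col' w < 3" using col c by (auto simp: col'_def)
    next
      fix u w assume uw: "u \<in> T" "w \<in> T" "{u, w} \<in> E"
      show "col' u \<noteq> col' w"
      proof (cases "u = v")
        case True
        then have "w \<noteq> v" using uw noloop by auto
        then have "w \<in> ?N" using uw True by (auto simp: insert_commute)
        then show ?thesis using True c \<open>w \<noteq> v\<close> by (auto simp: col'_def)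
      next
        case False
        show ?thesis
        proof (cases "w = v")
          case True
          then have "u \<in> ?N" using uw False by auto
          then show ?thesis using True c False by (auto simp: col'_def)
        next
          case False2: False
          then show ?thesis using col uw False by (auto simp: col'_def)
        qed
      qed
    qed
    then show False using T by simp
  qed
  then show ?thesis using T ne by blast
qed

lemma many_edges:
  assumes fin: "finite T" and deg: "\<forall>v\<in>T. 3 \<le> card {u\<in>T. {u,v}\<in>E \<and> u \<noteq> v}"
  shows "3 * card T \<le> 2 * card (E \<inter> pr T)"
proof -
  let ?N = "\<lambda>v. {u\<in>T. {u,v}\<in>E \<and> u \<noteq> v}"
  let ?F = "E \<inter> pr T"
  let ?D = "SIGMA v:T. ?N v"
  have finF: "finite ?F" using card_pr(1)[OF fin] by auto
  have "3 * card T = (\<Sum>v\<in>T. 3)" by simp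
  also have "\<dots> \<le> (\<Sum>v\<in>T. card (?N v))" using deg by (intro sum_mono) auto
  also have "\<dots> = card ?D" using fin by simp
  also have "card ?D \<le> card (\<Union>e\<in>?F. {x\<in>T\<times>T. {snd x, fst x} = e})"
    using fin finF apply (intro card_mono)
     apply simp
    apply (clarsimp simp: pr_def)
    by blast
  also have "\<dots> \<le> (\<Sum>e\<in>?F. card {x\<in>T\<times>T. {snd x, fst x} = e})" by (rule card_UN_le[OF finF])
  also have "\<dots> \<le> (\<Sum>e\<in>?F. 2)"
  proof (rule sum_mono)
    fix e assume "e \<in> ?F"
    then obtain a b where e: "e = {a,b}" unfolding pr_def by auto
    have "{x\<in>T\<times>T. {snd x, fst x} = e} \<subseteq> {(a,b),(b,a)}"
      using e by (auto simp: doubleton_eq_iff)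
    then have "card {x\<in>T\<times>T. {snd x, fst x} = e} \<le> card {(a,b),(b,a)}"
      by (intro card_mono) auto
    also have "\<dots> \<le> 2" by (simp add: card_insert_le_m1)
    finally show "card {x\<in>T\<times>T. {snd x, fst x} = e} \<le> 2" .
  qed
  also have "\<dots> = 2 * card ?F" by simp
  finally show ?thesis .
qed



lemma fact_lower: "(real k / exp 1) ^ k \<le> fact k"
proof -
  have "summable (\<lambda>n. real k ^ n /\<^sub>R fact n)" using exp_converges sums_summable by blast
  then have "(\<Sum>n\<in>{k}. real k ^ n /\<^sub>R fact n) \<le> (\<Sum>n. real k ^ n /\<^sub>R fact n)"
    by (intro sum_le_suminf) auto
  also have "\<dots> = exp (real k)" using exp_converges sums_unique by metis
  finally have 1: "real k ^ k / fact k \<le> exp (real k)" by (simp add: divide_inverse mult.commute)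
  have "exp (real k) = exp 1 ^ k" by (metis exp_of_nat_mult mult.right_neutral)
  then have "real k ^ k \<le> exp 1 ^ k * fact k" using 1 by (simp add: divide_le_eq)
  then show ?thesis by (simp add: power_divide divide_le_eq mult.commute)
qed

lemma choose_bound: "real (n choose t) \<le> (exp 1 * real n / real t) ^ t"
proof (cases "t = 0")
  case True then show ?thesis by simp
next
  case False
  have "real (n choose t) * fact t \<le> real n ^ t"
    using binomial_fact_pow[of n t] by (metis of_nat_fact of_nat_le_iff of_nat_mult of_nat_power)
  then have "real (n choose t) \<le> real n ^ t / fact t" by (simp add: le_divide_eq)
  also have "\<dots> \<le> real n ^ t / (real t / exp 1) ^ t"
    using fact_lower[of t] False by (intro divide_left_mono) auto
  also have "\<dots> = (exp 1 * real n / real t) ^ t" by (simp add: power_divide power_mult_distrib)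
  finally show ?thesis .
qed

lemma term_bound:
  fixes p :: real
  assumes t: "1 \<le> t" and M: "M \<le> t^2" and p: "0 \<le> p" and q: "exp 1 * real t * p \<le> 1"
    and k: "k = (3*t+1) div 2"
  shows "(real (n choose t) * real (M choose k) * p ^ k)^2 \<le> (exp 5 * real n ^ 2 * real t * p ^ 3) ^ t"
proof -
  have kt: "t \<le> k" "3 * t \<le> 2 * k" using k by auto
  have k1: "k \<ge> 1" using kt t by auto
  have A: "real (n choose t) \<le> (exp 1 * real n / real t) ^ t" by (rule choose_bound)
  have "real (M choose k) \<le> (exp 1 * real M / real k) ^ k" by (rule choose_bound)
  also have "\<dots> \<le> (exp 1 * real t) ^ k"
  proof (rule power_mono)
    have "real M \<le> real t * real t" using M by (metis of_nat_le_iff of_nat_mult power2_eq_square)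
    also have "\<dots> \<le> real t * real k" using kt by (intro mult_left_mono) auto
    finally have "real M / real k \<le> real t" using k1 by (simp add: divide_le_eq)
    then show "exp 1 * real M / real k \<le> exp 1 * real t"
      by (metis mult_left_mono exp_ge_zero times_divide_eq_right)
  qed auto
  finally have B: "real (M choose k) \<le> (exp 1 * real t) ^ k" .
  have "real (n choose t) * real (M choose k) * p ^ k \<le> (exp 1 * real n / real t) ^ t * ((exp 1 * real t) ^ k * p ^ k)"
    using A B p by (simp add: mult.assoc mult_mono)
  also have "\<dots> = (exp 1 * real n / real t) ^ t * (exp 1 * real t * p) ^ k"
    by (simp add: power_mult_distrib)
  finally have C: "real (n choose t) * real (M choose k) * p ^ k \<le> (exp 1 * real n / real t) ^ t * (exp 1 * real t * p) ^ k" .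
  have "(real (n choose t) * real (M choose k) * p ^ k)^2 \<le> ((exp 1 * real n / real t) ^ t * (exp 1 * real t * p) ^ k)^2"
    using C p by (intro power_mono) auto
  also have "\<dots> = (exp 1 * real n / real t) ^ (2*t) * (exp 1 * real t * p) ^ (2*k)"
    by (simp add: power_mult_distrib power_mult[symmetric] mult.commute)
  also have "\<dots> \<le> (exp 1 * real n / real t) ^ (2*t) * (exp 1 * real t * p) ^ (3*t)"
    using kt q p by (intro mult_left_mono power_decreasing) auto
  also have "\<dots> = ((exp 1 * real n / real t) ^ 2 * (exp 1 * real t * p) ^ 3) ^ t"
    by (simp only: power_mult power_mult_distrib)
  also have "(exp 1 * real n / real t) ^ 2 * (exp 1 * real t * p) ^ 3 = exp 5 * real n ^ 2 * real t * p ^ 3"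
  proof -
    have e: "exp (5::real) = exp 1 ^ 5" by (metis exp_of_nat_mult mult.right_neutral of_nat_numeral)
    show ?thesis using t unfolding e by (simp add: power2_eq_square power3_eq_cube field_simps numeral_eq_Suc)
  qed
  finally show ?thesis .
qed



lemma pr_sub: assumes "T \<subseteq> {..<n}" shows "pr T \<subseteq> all_edges n"
proof
  fix e assume "e \<in> pr T"
  then obtain u v where uv: "u \<in> T" "v \<in> T" "u \<noteq> v" "e = {u,v}" unfolding pr_def by auto
  show "e \<in> all_edges n"
  proof (cases "u < v")
    case True then show ?thesis using uv assms unfolding all_edges_def by blast
  next
    case False then have "v < u" using uv by auto
    then show ?thesis using uv assms unfolding all_edges_def by (auto simp: insert_commute)
  qed
qed

lemma noloop: "E \<subseteq> all_edges n \<Longrightarrow> {v} \<notin> E"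
  unfolding all_edges_def by (auto simp: doubleton_eq_iff)

lemma bad_bound:
  fixes c p y :: real and n :: nat
  assumes p: "0 \<le> p" "p \<le> 1" and q: "exp 1 * (c * sqrt (real n)) * p \<le> 1"
    and y: "0 \<le> y" and z: "exp 5 * real n ^ 2 * (c * sqrt (real n)) * p ^ 3 \<le> y ^ 2"
  shows "gnp_prob n p (\<lambda>E. \<not> (\<forall>S. S \<subseteq> {..<n} \<and> real (card S) \<le> c * sqrt (real n)
                   \<longrightarrow> induced_3_colorable E S)) \<le> (\<Sum>t\<in>{1..n}. y ^ t)"
proof -
  define kk where "kk t = (3*t+1) div 2" for t :: nat
  define I where "I = {t\<in>{1..n}. real t \<le> c * sqrt (real n)}"
  define TT where "TT t = {T. T \<subseteq> {..<n} \<and> card T = t}" for t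
  define FF where "FF T = {F. F \<subseteq> pr T \<and> card F = kk (card T)}" for T
  have finTT: "finite (TT t)" for t unfolding TT_def by (rule finite_subset[of _ "Pow {..<n}"]) auto
  have finFF: "finite (FF T)" if "finite T" for T
  proof -
    have "FF T \<subseteq> Pow (pr T)" unfolding FF_def by auto
    then show ?thesis using card_pr(1)[OF that] finite_subset by blast
  qed
  have step1: "gnp_prob n p (\<lambda>E. \<not> (\<forall>S. S \<subseteq> {..<n} \<and> real (card S) \<le> c * sqrt (real n)
                   \<longrightarrow> induced_3_colorable E S)) \<le>
      (\<Sum>t\<in>I. gnp_prob n p (\<lambda>E. \<exists>T\<in>TT t. \<exists>F\<in>FF T. F \<subseteq> E))"
  proof (rule gnp_union[OF p])
    show "finite I" unfolding I_def by auto
  next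
    fix E assume E: "E \<subseteq> all_edges n" and
      bad: "\<not> (\<forall>S. S \<subseteq> {..<n} \<and> real (card S) \<le> c * sqrt (real n) \<longrightarrow> induced_3_colorable E S)"
    then obtain S where S: "S \<subseteq> {..<n}" "real (card S) \<le> c * sqrt (real n)" "\<not> induced_3_colorable E S"
      by blast
    have finS: "finite S" using S(1) finite_subset by blast
    obtain T where T: "T \<subseteq> S" "T \<noteq> {}" "\<forall>v\<in>T. 3 \<le> card {u\<in>T. {u,v}\<in>E \<and> u \<noteq> v}"
      using critical[OF finS _ S(3)] noloop[OF E] by blast
    have finT: "finite T" using T finS finite_subset by blast
    have me: "3 * card T \<le> 2 * card (E \<inter> pr T)" using many_edges[OF finT T(3)] .
    have "kk (card T) \<le> card (E \<inter> pr T)" using me unfolding kk_def by linarith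
    then obtain F where F: "F \<subseteq> E \<inter> pr T" "card F = kk (card T)"
      by (meson obtain_subset_with_card_n)
    have ct: "card T \<le> card S" using card_mono[OF finS T(1)] .
    have "card S \<le> n" using card_mono[OF _ S(1)] by simp
    have "card T \<ge> 1" using T(2) finT by (simp add: Suc_leI card_gt_0_iff)
    then have "card T \<in> I" unfolding I_def using ct \<open>card S \<le> n\<close> S(2)
      by (auto intro: order_trans[OF of_nat_mono[OF ct]])
    moreover have "T \<in> TT (card T)" unfolding TT_def using T(1) S(1) by auto
    moreover have "F \<in> FF T" unfolding FF_def using F by auto
    ultimately show "\<exists>t\<in>I. \<exists>T\<in>TT t. \<exists>F\<in>FF T. F \<subseteq> E" using F by blast
  qed
  have step2: "gnp_prob n p (\<lambda>E. \<exists>T\<in>TT t. \<exists>F\<in>FF T. F \<subseteq> E) \<le> y ^ t" if t: "t \<in> I" for t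
  proof -
    have t1: "1 \<le> t" and tc: "real t \<le> c * sqrt (real n)" using t unfolding I_def by auto
    have "gnp_prob n p (\<lambda>E. \<exists>T\<in>TT t. \<exists>F\<in>FF T. F \<subseteq> E) \<le>
        (\<Sum>T\<in>TT t. gnp_prob n p (\<lambda>E. \<exists>F\<in>FF T. F \<subseteq> E))"
      by (rule gnp_union[OF p finTT]) blast
    also have "\<dots> \<le> (\<Sum>T\<in>TT t. real ((t^2) choose kk t) * p ^ kk t)"
    proof (rule sum_mono)
      fix T assume T: "T \<in> TT t"
      have finT: "finite T" using T unfolding TT_def using finite_subset by blast
      have "gnp_prob n p (\<lambda>E. \<exists>F\<in>FF T. F \<subseteq> E) \<le> (\<Sum>F\<in>FF T. gnp_prob n p (\<lambda>E. F \<subseteq> E))"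
        by (rule gnp_union[OF p finFF[OF finT]]) blast
      also have "\<dots> = (\<Sum>F\<in>FF T. p ^ kk t)"
      proof (rule sum.cong[OF refl])
        fix F assume "F \<in> FF T"
        then have "F \<subseteq> all_edges n" "card F = kk t"
          using pr_sub[of T n] T unfolding FF_def TT_def by auto
        then show "gnp_prob n p (\<lambda>E. F \<subseteq> E) = p ^ kk t" using gnp_superset by simp
      qed
      also have "\<dots> = real (card (pr T) choose kk t) * p ^ kk t"
        using T n_subsets[OF card_pr(1)[OF finT], of "kk t"] unfolding FF_def TT_def by simp
      also have "\<dots> \<le> real ((t^2) choose kk t) * p ^ kk t"
        using card_pr(2)[OF finT] T p unfolding TT_def
        by (intro mult_right_mono) (auto intro: binomial_right_mono)
      finally show "gnp_prob n p (\<lambda>E. \<exists>F\<in>FF T. F \<subseteq> E) \<le> real ((t^2) choose kk t) * p ^ kk t" .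
    qed
    also have "\<dots> = real (n choose t) * real ((t^2) choose kk t) * p ^ kk t"
      unfolding TT_def using n_subsets[of "{..<n}" t] by simp
    also have "\<dots> \<le> y ^ t"
    proof (rule power2_le_imp_le)
      have qt: "exp 1 * real t * p \<le> 1"
        using q tc p by (smt (verit) exp_gt_zero mult_left_mono mult_right_mono)
      have "(real (n choose t) * real ((t^2) choose kk t) * p ^ kk t)^2
          \<le> (exp 5 * real n ^ 2 * real t * p ^ 3) ^ t"
        by (rule term_bound[OF t1 _ p(1) qt]) (auto simp: kk_def)
      also have "\<dots> \<le> (y^2) ^ t"
      proof (rule power_mono)
        have "exp 5 * real n ^ 2 * real t * p ^ 3 \<le> exp 5 * real n ^ 2 * (c * sqrt (real n)) * p ^ 3"
          using tc p by (intro mult_right_mono mult_left_mono) auto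
        then show "exp 5 * real n ^ 2 * real t * p ^ 3 \<le> y^2" using z by linarith
      qed (use p in auto)
      also have "\<dots> = (y ^ t)^2" by (simp add: power_mult[symmetric] mult.commute)
      finally show "(real (n choose t) * real ((t^2) choose kk t) * p ^ kk t)^2 \<le> (y ^ t)^2" .
    qed (use y in auto)
    finally show ?thesis .
  qed
  have "(\<Sum>t\<in>I. gnp_prob n p (\<lambda>E. \<exists>T\<in>TT t. \<exists>F\<in>FF T. F \<subseteq> E)) \<le> (\<Sum>t\<in>I. y ^ t)"
    using step2 by (rule sum_mono)
  also have "\<dots> \<le> (\<Sum>t\<in>{1..n}. y ^ t)"
    using y by (intro sum_mono2) (auto simp: I_def)
  finally show ?thesis using step1 by linarith
qed



lemma geo_bound:
  fixes y :: real assumes "0 \<le> y" "y \<le> 1/2"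
  shows "(\<Sum>t\<in>{1..n}. y ^ t) \<le> 2 * y"
proof -
  have eq: "(\<Sum>t\<in>{1..n}. y ^ t) = y * (\<Sum>i<n. y ^ i)"
    by (induction n) (simp_all add: algebra_simps)
  have "(\<Sum>i<n. y ^ i) = (1 - y ^ n) / (1 - y)" using assms by (simp add: sum_gp_strict)
  also have "\<dots> \<le> 1 / (1 - y)" using assms by (intro divide_right_mono) auto
  also have "\<dots> \<le> 2" using assms by (simp add: divide_le_eq)
  finally have "(\<Sum>i<n. y ^ i) \<le> 2" .
  then show ?thesis unfolding eq using assms by (simp add: mult_left_mono mult.commute)
qed

lemma L1: fixes x a :: real assumes "1 \<le> x" shows "sqrt x * x powr (-a) = x powr (1/2 - a)"
proof -
  have "sqrt x = x powr (1/2)" using assms by (simp add: powr_half_sqrt)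
  then show ?thesis by (simp add: powr_add[symmetric])
qed
lemma L2: fixes x a :: real assumes "1 \<le> x" shows "x^2 * sqrt x * (x powr (-a))^3 = x powr (5/2 - 3*a)"
proof -
  have s: "sqrt x = x powr (1/2)" using assms by (simp add: powr_half_sqrt)
  have a: "x^2 = x powr 2" using assms powr_realpow[of x 2] by simp
  have b: "(x powr (-a))^3 = x powr (-3*a)" using assms powr_power[of x "-a" 3] by simp
  have "x^2 * sqrt x * (x powr (-a))^3 = x powr 2 * x powr (1/2) * x powr (-3*a)" using a b s by simp
  also have "\<dots> = x powr (2 + 1/2 + (-3*a))" by (simp only: powr_add)
  finally show ?thesis by simp
qed

theorem mainTheorem1:
  fixes \<alpha> c :: real
  assumes "\<alpha> > 5/6" and "c > 0"
  shows "(\<lambda>n. gnp_prob n (real n powr (-\<alpha>))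
            (\<lambda>E. \<forall>S. S \<subseteq> {..<n} \<and> real (card S) \<le> c * sqrt (real n)
                   \<longrightarrow> induced_3_colorable E S)) \<longlonglongrightarrow> 1"
proof -
  define P where "P n = (\<lambda>E. \<forall>S. S \<subseteq> {..<n} \<and> real (card S) \<le> c * sqrt (real n)
                   \<longrightarrow> induced_3_colorable E S)" for n
  define p where "p n = real n powr (-\<alpha>)" for n :: nat
  define w where "w n = exp 1 * c * real n powr (1/2 - \<alpha>)" for n :: nat
  define z where "z n = exp 5 * c * real n powr (5/2 - 3*\<alpha>)" for n :: nat
  define y where "y n = sqrt (z n)" for n
  have wlim: "w \<longlonglongrightarrow> 0"
    unfolding w_def using assms
    by (auto intro!: tendsto_mult_right_zero tendsto_neg_powr filterlim_real_sequentially)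
  have zlim: "z \<longlonglongrightarrow> 0"
    unfolding z_def using assms
    by (auto intro!: tendsto_mult_right_zero tendsto_neg_powr filterlim_real_sequentially)
  have ylim: "y \<longlonglongrightarrow> 0"
    unfolding y_def using tendsto_real_sqrt[OF zlim] by simp
  have ev: "eventually (\<lambda>n. 1 \<le> n \<and> w n \<le> 1 \<and> y n \<le> 1/2) sequentially"
  proof -
    have a: "eventually (\<lambda>n. w n < 1) sequentially" using order_tendstoD(2)[OF wlim] by simp
    have b: "eventually (\<lambda>n. y n < 1/2) sequentially" using order_tendstoD(2)[OF ylim, of "1/2"] by simp
    show ?thesis using eventually_ge_at_top[of 1] a b by eventually_elim auto
  qed
  have bad: "eventually (\<lambda>n. gnp_prob n (p n) (\<lambda>E. \<not> P n E) \<le> 2 * y n) sequentially"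
    using ev
  proof eventually_elim
    case (elim n)
    then have n1: "1 \<le> real n" by simp
    have z0: "0 \<le> z n" unfolding z_def using assms by simp
    have y0: "0 \<le> y n" unfolding y_def using z0 by simp
    have p0: "0 \<le> p n" unfolding p_def by simp
    have p1: "p n \<le> 1" unfolding p_def using n1 assms
      by (simp add: powr_minus ge_one_powr_ge_zero inverse_le_1_iff)
    have sq: "sqrt (real n) = real n powr (1/2)" using powr_half_sqrt by simp
    have q: "exp 1 * (c * sqrt (real n)) * p n = w n"
      unfolding w_def p_def using L1[OF n1, of \<alpha>] by (simp add: mult.assoc)
    have "exp 5 * real n ^ 2 * (c * sqrt (real n)) * p n ^ 3 = z n"
    proof -
      have "real n ^ 2 * sqrt (real n) * p n ^ 3 = real n powr (5/2 - 3*\<alpha>)"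
        unfolding p_def by (rule L2[OF n1])
      then show ?thesis unfolding z_def by (simp add: algebra_simps)
    qed
    then have zz: "exp 5 * real n ^ 2 * (c * sqrt (real n)) * p n ^ 3 \<le> y n ^ 2"
    proof -
      have "y n ^ 2 = z n" unfolding y_def using z0 by simp
      then show ?thesis using \<open>exp 5 * real n ^ 2 * (c * sqrt (real n)) * p n ^ 3 = z n\<close> by linarith
    qed
    have "gnp_prob n (p n) (\<lambda>E. \<not> P n E) \<le> (\<Sum>t\<in>{1..n}. y n ^ t)"
      unfolding P_def by (rule bad_bound[OF p0 p1 _ y0 zz]) (use q elim in simp)
    also have "\<dots> \<le> 2 * y n" using geo_bound y0 elim by blast
    finally show ?case .
  qed
  have badlim: "(\<lambda>n. gnp_prob n (p n) (\<lambda>E. \<not> P n E)) \<longlonglongrightarrow> 0"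
  proof (rule tendsto_sandwich[OF _ bad])
    show "eventually (\<lambda>n. 0 \<le> gnp_prob n (p n) (\<lambda>E. \<not> P n E)) sequentially"
      using eventually_ge_at_top[of 1]
    proof eventually_elim
      case (elim n)
      have "p n \<le> 1" unfolding p_def using elim assms
        by (simp add: powr_minus ge_one_powr_ge_zero inverse_le_1_iff)
      then show ?case by (intro gnp_nonneg) (auto simp: p_def)
    qed
    show "(\<lambda>n. 0) \<longlonglongrightarrow> (0::real)" by simp
    show "(\<lambda>n. 2 * y n) \<longlonglongrightarrow> 0" using tendsto_mult_right_zero[OF ylim] by simp
  qed
  have "(\<lambda>n. 1 - gnp_prob n (p n) (\<lambda>E. \<not> P n E)) \<longlonglongrightarrow> 1 - 0"
    by (intro tendsto_intros badlim)
  moreover have "(\<lambda>n. gnp_prob n (p n) (P n)) = (\<lambda>n. 1 - gnp_prob n (p n) (\<lambda>E. \<not> P n E))"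
    by (rule ext, rule gnp_compl)
  ultimately have "(\<lambda>n. gnp_prob n (p n) (P n)) \<longlonglongrightarrow> 1" by simp
  then show ?thesis unfolding P_def p_def .
qed


end
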